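(* Let $\Theta$ and $\mathcal{Z}$ be measurable spaces, let $S$ be a random element of $\mathcal{Z}$, and let $\Delta:\Theta\times\mathcal{Z}\to\mathbb{R}$ and $V:\Theta\times\mathcal{Z}\to[0,\infty)$ be measurable maps such that, writing $\Delta_\vartheta=\Delta(\vartheta,S)$, $V_\vartheta=V(\vartheta,S)$, the pair $(\Delta_\vartheta,\sqrt{V_\vartheta})$ is a canonical pair for every fixed $\vartheta\in\Theta$. Let $\hat p$ be a probability kernel from $\mathcal{Z}$ to $\Theta$, $p^0$ a probability measure on $\Theta$, and $\theta$ a random element of $\Theta$ whose conditional distribution given $S$ is $\hat p_S$; assume $\int|\Delta(\vartheta,S)|\,\hat p_S(d\vartheta)<\infty$ a.s. Then: (i) for every $y>0$, \[ \mathbb{E}\left[\frac{y}{\sqrt{y^2+\mathbb{E}[V_\theta\mid S]}}\exp\left(\frac{\mathbb{E}[\Delta_\theta\mid S]^2}{2(y^2+\mathbb{E}[V_\theta\mid S])}-\mathrm{KL}(\hat p_S\,\|\,p^0)\right)\right]\le 1; \] (ii) if moreover $0<\mathbb{E}[V_\theta]<\infty$, then for every $x\ge0$, \[ \mathbb{E}\left[\exp\left(x\sqrt{\left(\frac{\mathbb{E}[\Delta_\theta\mid S]^2}{\mathbb{E}[V_\theta]+\mathbb{E}[V_\theta\mid S]}-2\,\mathrm{KL}(\hat p_S\,\|\,p^0)\right)_+}\right)\right]\le 2e^{x^2}. \]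
   Context: A pair $(A,B)$ of real random variables is a canonical pair if $B\ge0$ and $\sup_{\lambda\in\mathbb{R}}\mathbb{E}[\exp(\lambda A-\lambda^2B^2/2)]\le1$. A probability kernel $\hat p$ from $\mathcal{Z}$ to $\Theta$ assigns to each $z$ a probability measure $\hat p_z$ on $\Theta$, measurably in $z$. Notation: $\mathbb{E}[\Delta_\theta\mid S]=\int\Delta(\vartheta,S)\,\hat p_S(d\vartheta)$, $\mathbb{E}[V_\theta\mid S]=\int V(\vartheta,S)\,\hat p_S(d\vartheta)$, $\mathbb{E}[V_\theta]=\mathbb{E}[\mathbb{E}[V_\theta\mid S]]$. $\mathrm{KL}(p\,\|\,q)=\int\ln\frac{dp}{dq}\,dp$ if $p\ll q$ and $+\infty$ otherwise, with conventions $e^{-\infty}=0$ and $(-\infty)_+=0$. $(s)_+=\max\{0,s\}$. *)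

theory Defs
  imports "HOL-Probability.Probability"
begin

text \<open>The integral of ln(dp/dq) w.r.t. p is split into
  its positive and negative parts (the negative part is always finite for
  probability measures).\<close>
definition KL :: "'a measure \<Rightarrow> 'a measure \<Rightarrow> ereal" where
  "KL p q = (if absolutely_continuous q p then
      enn2ereal (\<integral>\<^sup>+ x. ennreal (ln (enn2real (RN_deriv q p x))) \<partial>p)
      - enn2ereal (\<integral>\<^sup>+ x. ennreal (- ln (enn2real (RN_deriv q p x))) \<partial>p)
    else \<infinity>)"

definition eexp :: "ereal \<Rightarrow> ennreal" where
  "eexp x = (case x of ereal r \<Rightarrow> ennreal (exp r) | PInfty \<Rightarrow> \<infinity> | MInfty \<Rightarrow> 0)"

end

theory Submission
  imports Defs
begin

lemma xlogx_bound:
  fixes r :: real assumes "0 < r" shows "r * (- ln r) \<le> 1"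
proof -
  have "ln (1/r) \<le> 1/r - 1" using assms by (intro ln_le_minus_one) auto
  hence "- ln r \<le> 1/r - 1" using assms by (simp add: ln_div)
  hence "r * (- ln r) \<le> r * (1/r - 1)" using assms by (intro mult_left_mono) auto
  also have "\<dots> = 1 - r" using assms by (simp add: field_simps)
  finally show ?thesis using assms by simp
qed

lemma RN_neg_bound:
  "F * ennreal (- ln (enn2real F)) \<le> 1"
proof (cases F rule: ennreal_cases)
  case (real r)
  show ?thesis
  proof (cases "r = 0")
    case True thus ?thesis using real by simp
  next
    case False
    hence r0: "r > 0" using real by simp
    show ?thesis
    proof (cases "- ln r \<ge> 0")
      case True
      have "F * ennreal (- ln (enn2real F)) = ennreal (r * (- ln r))"
        using real r0 True by (simp add: ennreal_mult[symmetric])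
      also have "\<dots> \<le> ennreal 1" using xlogx_bound[OF r0] by (rule ennreal_leI)
      finally show ?thesis by simp
    next
      case False
      hence "ennreal (- ln r) = 0" by (simp add: ennreal_neg)
      thus ?thesis using real by simp
    qed
  qed
next
  case top thus ?thesis by simp
qed

lemma KL_neg_finite:
  assumes p: "prob_space p" and q: "prob_space q" and s: "sets p = sets q"
    and ac: "absolutely_continuous q p"
  shows "(\<integral>\<^sup>+ x. ennreal (- ln (enn2real (RN_deriv q p x))) \<partial>p) \<le> 1"
proof -
  interpret q: prob_space q by fact
  have "(\<integral>\<^sup>+ x. ennreal (- ln (enn2real (RN_deriv q p x))) \<partial>p)
      = (\<integral>\<^sup>+ x. RN_deriv q p x * ennreal (- ln (enn2real (RN_deriv q p x))) \<partial>q)"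
    by (rule q.RN_deriv_nn_integral[OF ac s]) measurable
  also have "\<dots> \<le> (\<integral>\<^sup>+ x. 1 \<partial>q)" by (intro nn_integral_mono RN_neg_bound)
  also have "\<dots> = 1" by (simp add: q.emeasure_space_1)
  finally show ?thesis .
qed

lemma KL_cases:
  assumes p: "prob_space p" and q: "prob_space q" and s: "sets p = sets q"
  shows "KL p q = \<infinity> \<or> (\<exists>k. KL p q = ereal k \<and> absolutely_continuous q p \<and>
     integrable p (\<lambda>x. ln (enn2real (RN_deriv q p x))) \<and>
     k = (\<integral>x. ln (enn2real (RN_deriv q p x)) \<partial>p))"
proof (cases "absolutely_continuous q p")
  case False thus ?thesis by (simp add: KL_def)
next
  case ac: True
  define L where "L = (\<lambda>x. ln (enn2real (RN_deriv q p x)))"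
  have Lm: "L \<in> borel_measurable p" unfolding L_def using s by measurable
  define A where "A = (\<integral>\<^sup>+ x. ennreal (L x) \<partial>p)"
  define B where "B = (\<integral>\<^sup>+ x. ennreal (- L x) \<partial>p)"
  have B: "B \<le> 1" unfolding B_def L_def by (rule KL_neg_finite[OF assms ac])
  have Bf: "B < \<infinity>" using B by (metis ennreal_one_less_top infinity_ennreal_def order_le_less_trans)
  have KL: "KL p q = enn2ereal A - enn2ereal B" using ac by (simp add: KL_def A_def B_def L_def)
  show ?thesis
  proof (cases "A = \<infinity>")
    case True
    have "KL p q = \<infinity>" using KL True Bf by (cases B) auto
    thus ?thesis by (rule disjI1)
  next
    case False
    hence Af: "A < \<infinity>" by (simp add: less_top)
    have int: "integrable p L"
    proof (rule integrableI_bounded[OF Lm])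
      have "(\<integral>\<^sup>+ x. ennreal (norm (L x)) \<partial>p) = (\<integral>\<^sup>+ x. ennreal (L x) + ennreal (- L x) \<partial>p)"
        by (intro nn_integral_cong) (auto simp: ennreal_neg abs_real_def)
      also have "\<dots> = A + B" unfolding A_def B_def by (intro nn_integral_add) (use Lm in auto)
      also have "\<dots> < \<infinity>" using Af Bf by simp
      finally show "(\<integral>\<^sup>+ x. ennreal (norm (L x)) \<partial>p) < \<infinity>" .
    qed
    have "(\<integral>x. L x \<partial>p) = (\<integral>x. max 0 (L x) - max 0 (- L x) \<partial>p)"
      by (intro Bochner_Integration.integral_cong refl) (simp add: max_def)
    also have "\<dots> = (\<integral>x. max 0 (L x) \<partial>p) - (\<integral>x. max 0 (- L x) \<partial>p)"
      using int by (intro Bochner_Integration.integral_diff) auto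
    also have "(\<integral>x. max 0 (L x) \<partial>p) = enn2real A"
      unfolding A_def using Lm by (subst integral_eq_nn_integral) (auto intro!: arg_cong[where f=enn2real] nn_integral_cong simp: ennreal_max_0)
    also have "(\<integral>x. max 0 (- L x) \<partial>p) = enn2real B"
      unfolding B_def using Lm by (subst integral_eq_nn_integral) (auto intro!: arg_cong[where f=enn2real] nn_integral_cong simp: ennreal_max_0)
    finally have eq: "(\<integral>x. L x \<partial>p) = enn2real A - enn2real B" .
    have "KL p q = ereal (enn2real A - enn2real B)"
      using KL Af Bf by (cases A; cases B) (auto simp: enn2ereal_ennreal)
    show ?thesis
      apply (rule disjI2)
      apply (rule exI[of _ "enn2real A - enn2real B"])
      using ac int eq \<open>KL p q = ereal (enn2real A - enn2real B)\<close> unfolding L_def by simp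
  qed
qed

lemma nn_integral_ge_integral:
  fixes h :: "'a \<Rightarrow> real"
  assumes "integrable M h"
  shows "ennreal (\<integral>x. h x \<partial>M) \<le> (\<integral>\<^sup>+ x. ennreal (h x) \<partial>M)"
proof -
  have "(\<integral>x. h x \<partial>M) \<le> (\<integral>x. max 0 (h x) \<partial>M)"
    using assms by (intro integral_mono) auto
  hence "ennreal (\<integral>x. h x \<partial>M) \<le> ennreal (\<integral>x. max 0 (h x) \<partial>M)" by (rule ennreal_leI)
  also have "\<dots> = (\<integral>\<^sup>+ x. ennreal (max 0 (h x)) \<partial>M)"
    using assms by (intro nn_integral_eq_integral[symmetric]) auto
  also have "\<dots> = (\<integral>\<^sup>+ x. ennreal (h x) \<partial>M)"
    by (intro nn_integral_cong) (simp add: ennreal_max_0)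
  finally show ?thesis .
qed

lemma exp_jensen_nn:
  fixes u :: "'a \<Rightarrow> real"
  assumes "prob_space p" "integrable p u"
  shows "ennreal (exp (\<integral>x. u x \<partial>p)) \<le> (\<integral>\<^sup>+ x. ennreal (exp (u x)) \<partial>p)"
proof -
  interpret prob_space p by fact
  define c where "c = (\<integral>x. u x \<partial>p)"
  have int: "integrable p (\<lambda>x. exp c * (1 + u x - c))"
    using assms by auto
  have "(\<integral>x. exp c * (1 + u x - c) \<partial>p) = exp c * (1 + c - c)"
    using assms by (simp add: c_def prob_space)
  hence "ennreal (exp c) = ennreal (\<integral>x. exp c * (1 + u x - c) \<partial>p)" by simp
  also have "\<dots> \<le> (\<integral>\<^sup>+ x. ennreal (exp c * (1 + u x - c)) \<partial>p)"
    by (rule nn_integral_ge_integral[OF int])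
  also have "\<dots> \<le> (\<integral>\<^sup>+ x. ennreal (exp (u x)) \<partial>p)"
  proof (intro nn_integral_mono ennreal_leI)
    fix x
    have "1 + (u x - c) \<le> exp (u x - c)" by (rule exp_ge_add_one_self)
    hence "exp c * (1 + (u x - c)) \<le> exp c * exp (u x - c)" by (intro mult_left_mono) auto
    also have "exp c * exp (u x - c) = exp (u x)" by (simp add: exp_diff)
    finally show "exp c * (1 + u x - c) \<le> exp (u x)" by (simp add: algebra_simps)
  qed
  finally show ?thesis unfolding c_def .
qed

lemma DV:
  assumes p: "prob_space p" and q: "prob_space q" and s: "sets p = sets q"
    and KL: "KL p q = ereal k"
    and g: "integrable p g" "g \<in> borel_measurable q"
  shows "ennreal (exp ((\<integral>x. g x \<partial>p) - k)) \<le> (\<integral>\<^sup>+ x. ennreal (exp (g x)) \<partial>q)"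
proof -
  interpret q: prob_space q by fact
  interpret p: prob_space p by fact
  from KL_cases[OF p q s] KL have ac: "absolutely_continuous q p"
    and iL: "integrable p (\<lambda>x. ln (enn2real (RN_deriv q p x)))"
    and k: "k = (\<integral>x. ln (enn2real (RN_deriv q p x)) \<partial>p)" by auto
  define F where "F = RN_deriv q p"
  define f where "f = (\<lambda>x. enn2real (F x))"
  have Fm[measurable]: "F \<in> borel_measurable q" unfolding F_def by simp
  have fin: "AE x in q. F x \<noteq> \<infinity>" unfolding F_def
    using q.RN_deriv_finite[OF _ ac s] p.sigma_finite_measure by simp
  have "(\<integral>\<^sup>+ x. F x * ennreal (exp (g x - ln (f x))) \<partial>q) \<le> (\<integral>\<^sup>+ x. ennreal (exp (g x)) \<partial>q)"
  proof (rule nn_integral_mono_AE)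
    show "AE x in q. F x * ennreal (exp (g x - ln (f x))) \<le> ennreal (exp (g x))"
      using fin
    proof eventually_elim
      case (elim x)
      then obtain r where r: "F x = ennreal r" "0 \<le> r" by (cases "F x" rule: ennreal_cases) auto
      show ?case
      proof (cases "r = 0")
        case True thus ?thesis using r by simp
      next
        case False
        hence "r > 0" using r by simp
        hence "r * exp (g x - ln r) = exp (g x)" by (simp add: exp_diff)
        thus ?thesis using r \<open>r>0\<close> unfolding f_def by (simp add: ennreal_mult[symmetric])
      qed
    qed
  qed
  moreover have "(\<integral>\<^sup>+ x. F x * ennreal (exp (g x - ln (f x))) \<partial>q)
      = (\<integral>\<^sup>+ x. ennreal (exp (g x - ln (f x))) \<partial>p)"
    unfolding F_def f_def by (rule q.RN_deriv_nn_integral[OF ac s, symmetric]) (use g in measurable)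
  moreover have "ennreal (exp (\<integral>x. g x - ln (f x) \<partial>p)) \<le> (\<integral>\<^sup>+ x. ennreal (exp (g x - ln (f x))) \<partial>p)"
    by (rule exp_jensen_nn[OF p]) (use g iL in \<open>auto simp: f_def F_def\<close>)
  moreover have "(\<integral>x. g x - ln (f x) \<partial>p) = (\<integral>x. g x \<partial>p) - k"
    using g iL k unfolding f_def F_def by (subst Bochner_Integration.integral_diff) auto
  ultimately show ?thesis by (metis order_trans)
qed

lemma nn_integral_normal_density: "\<sigma> > 0 \<Longrightarrow> (\<integral>\<^sup>+ x. ennreal (normal_density \<mu> \<sigma> x) \<partial>lborel) = 1"
  by (subst nn_integral_eq_integral) (auto intro: integrable_normal_density simp: integral_normal_density)

lemma gauss_mix:
  fixes y v d :: real assumes y: "y > 0" and v: "v \<ge> 0"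
  shows "(\<integral>\<^sup>+ l. ennreal (normal_density 0 (1/y) l) * ennreal (exp (l * d - l\<^sup>2 * v / 2)) \<partial>lborel)
     = ennreal (y / sqrt (y\<^sup>2 + v) * exp (d\<^sup>2 / (2 * (y\<^sup>2 + v))))"
proof -
  define s where "s = sqrt (y\<^sup>2 + v)"
  have "y\<^sup>2 > 0" using y by simp
  hence yv: "y\<^sup>2 + v > 0" using v by linarith
  hence s: "s > 0" "s\<^sup>2 = y\<^sup>2 + v" by (auto simp: s_def)
  define C where "C = y / s * exp (d\<^sup>2 / (2 * s\<^sup>2))"
  have C: "C \<ge> 0" using y s by (simp add: C_def)
  have pt: "normal_density 0 (1/y) l * exp (l * d - l\<^sup>2 * v / 2) = C * normal_density (d / s\<^sup>2) (1/s) l" for l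
  proof -
    have n1: "normal_density 0 (1/y) l = y / sqrt (2*pi) * exp (- l\<^sup>2 * y\<^sup>2 / 2)"
      using y by (simp add: normal_density_def real_sqrt_mult real_sqrt_divide power_divide field_simps)
    have n2: "normal_density (d / s\<^sup>2) (1/s) l = s / sqrt (2*pi) * exp (- (l - d / s\<^sup>2)\<^sup>2 * s\<^sup>2 / 2)"
      using s(1) by (simp add: normal_density_def real_sqrt_mult real_sqrt_divide power_divide field_simps)
    have e: "- l\<^sup>2 * y\<^sup>2 / 2 + (l * d - l\<^sup>2 * v / 2) = d\<^sup>2 / (2 * s\<^sup>2) + (- (l - d / s\<^sup>2)\<^sup>2 * s\<^sup>2 / 2)"
    proof -
      have e1: "- l\<^sup>2 * y\<^sup>2 / 2 + (l * d - l\<^sup>2 * v / 2) = - l\<^sup>2 * s\<^sup>2 / 2 + l * d"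
        unfolding s(2) by (simp add: field_simps)
      have e2: "d\<^sup>2 / (2 * s\<^sup>2) + (- (l - d / s\<^sup>2)\<^sup>2 * s\<^sup>2 / 2) = - l\<^sup>2 * s\<^sup>2 / 2 + l * d"
        using s(1) by (simp add: field_simps power2_eq_square)
      show ?thesis using e1 e2 by simp
    qed
    have "normal_density 0 (1/y) l * exp (l * d - l\<^sup>2 * v / 2)
        = y / sqrt (2*pi) * exp (- l\<^sup>2 * y\<^sup>2 / 2 + (l * d - l\<^sup>2 * v / 2))"
      unfolding n1 exp_add by (simp add: mult.assoc)
    also have "\<dots> = y / sqrt (2*pi) * exp (d\<^sup>2 / (2 * s\<^sup>2)) * exp (- (l - d / s\<^sup>2)\<^sup>2 * s\<^sup>2 / 2)"
      unfolding e exp_add by (simp add: mult.assoc)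
    also have "\<dots> = C * normal_density (d / s\<^sup>2) (1/s) l"
      unfolding n2 C_def using s by (simp add: field_simps)
    finally show ?thesis .
  qed
  have "(\<integral>\<^sup>+ l. ennreal (normal_density 0 (1/y) l) * ennreal (exp (l * d - l\<^sup>2 * v / 2)) \<partial>lborel)
      = (\<integral>\<^sup>+ l. ennreal C * ennreal (normal_density (d / s\<^sup>2) (1/s) l) \<partial>lborel)"
    by (intro nn_integral_cong) (simp add: ennreal_mult[symmetric] pt C)
  also have "\<dots> = ennreal C"
    using s by (subst nn_integral_cmult) (auto simp: nn_integral_normal_density)
  finally show ?thesis unfolding C_def s_def using s y v by simp
qed

lemma eexp_diff_ereal: "eexp (ereal b - ereal k) = ennreal (exp b) * ennreal (exp (- k))"
proof -
  have "eexp (ereal b - ereal k) = ennreal (exp (b - k))" by (simp add: eexp_def)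
  also have "exp (b - k) = exp b * exp (- k)" by (simp add: exp_add[symmetric])
  finally show ?thesis by (simp add: ennreal_mult)
qed

lemma pointwise:
  fixes D W :: "'t \<Rightarrow> real"
  assumes p: "prob_space p" "sets p = sets T" and p0: "prob_space p0" "sets p0 = sets T"
    and Dm: "D \<in> borel_measurable T" and Wm: "W \<in> borel_measurable T"
    and Wn: "\<And>t. t \<in> space T \<Longrightarrow> W t \<ge> 0"
    and int: "integrable p D" and vfin: "(\<integral>\<^sup>+ t. ennreal (W t) \<partial>p) \<noteq> \<infinity>" and y: "y > 0"
  shows "(let d = (\<integral>t. D t \<partial>p); v = (\<integral>\<^sup>+ t. ennreal (W t) \<partial>p)
          in if v = \<infinity> then 0
            else ennreal (y / sqrt (y\<^sup>2 + enn2real v))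
               * eexp (ereal (d\<^sup>2 / (2 * (y\<^sup>2 + enn2real v))) - KL p p0))
     \<le> (\<integral>\<^sup>+ l. ennreal (normal_density 0 (1/y) l) *
           (\<integral>\<^sup>+ t. ennreal (exp (l * D t - l\<^sup>2 * (sqrt (W t))\<^sup>2 / 2)) \<partial>p0) \<partial>lborel)"
proof -
  interpret p: prob_space p by fact
  define d where "d = (\<integral>t. D t \<partial>p)"
  define v where "v = (\<integral>\<^sup>+ t. ennreal (W t) \<partial>p)"
  define vr where "vr = enn2real v"
  have spp: "space p = space T" using p(2) by (rule sets_eq_imp_space_eq)
  have Wmp: "W \<in> borel_measurable p" by (subst measurable_cong_sets[OF p(2) refl]) (rule Wm)
  have Dmp0: "D \<in> borel_measurable p0" by (subst measurable_cong_sets[OF p0(2) refl]) (rule Dm)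
  have Wmp0: "W \<in> borel_measurable p0" by (subst measurable_cong_sets[OF p0(2) refl]) (rule Wm)
  have vv: "v = ennreal vr" using vfin unfolding vr_def v_def by (simp add: less_top)
  have vr0: "vr \<ge> 0" unfolding vr_def by simp
  have intW: "integrable p W"
    using Wmp Wn vfin spp by (intro integrableI_nonneg) (auto simp: less_top)
  have intWv: "(\<integral>t. W t \<partial>p) = vr"
    unfolding vr_def v_def using Wmp Wn spp by (subst integral_eq_nn_integral) auto
  have sq: "t \<in> space p \<Longrightarrow> (sqrt (W t))\<^sup>2 = W t" for t using Wn spp by simp
  have LHS: "(let d = (\<integral>t. D t \<partial>p); v = (\<integral>\<^sup>+ t. ennreal (W t) \<partial>p)
          in if v = \<infinity> then 0
            else ennreal (y / sqrt (y\<^sup>2 + enn2real v))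
               * eexp (ereal (d\<^sup>2 / (2 * (y\<^sup>2 + enn2real v))) - KL p p0))
      = ennreal (y / sqrt (y\<^sup>2 + vr)) * eexp (ereal (d\<^sup>2 / (2 * (y\<^sup>2 + vr))) - KL p p0)"
    using vfin unfolding d_def[symmetric] v_def[symmetric] vr_def by (simp add: Let_def)
  from KL_cases[OF p(1) p0(1)] p(2) p0(2)
  have "KL p p0 = \<infinity> \<or> (\<exists>k. KL p p0 = ereal k)" by auto
  thus ?thesis
  proof
    assume "KL p p0 = \<infinity>"
    thus ?thesis unfolding LHS by (simp add: eexp_def)
  next
    assume "\<exists>k. KL p p0 = ereal k"
    then obtain k where k: "KL p p0 = ereal k" by blast
    have "ennreal (y / sqrt (y\<^sup>2 + vr)) * eexp (ereal (d\<^sup>2 / (2 * (y\<^sup>2 + vr))) - KL p p0)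
        = ennreal (y / sqrt (y\<^sup>2 + vr) * exp (d\<^sup>2 / (2 * (y\<^sup>2 + vr)))) * ennreal (exp (- k))"
    proof -
      have e: "exp (d\<^sup>2 / (2 * (y\<^sup>2 + vr)) - k) = exp (d\<^sup>2 / (2 * (y\<^sup>2 + vr))) * exp (- k)"
        by (simp add: exp_add[symmetric])
      have "eexp (ereal (d\<^sup>2 / (2 * (y\<^sup>2 + vr))) - KL p p0) = ennreal (exp (d\<^sup>2 / (2 * (y\<^sup>2 + vr)))) * ennreal (exp (- k))"
        unfolding k by (rule eexp_diff_ereal)
      moreover have "ennreal (y / sqrt (y\<^sup>2 + vr) * exp (d\<^sup>2 / (2 * (y\<^sup>2 + vr)))) = ennreal (y / sqrt (y\<^sup>2 + vr)) * ennreal (exp (d\<^sup>2 / (2 * (y\<^sup>2 + vr))))"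
        using y vr0 by (intro ennreal_mult) auto
      ultimately show ?thesis by (simp add: mult.assoc)
    qed
    also have "\<dots> = (\<integral>\<^sup>+ l. ennreal (normal_density 0 (1/y) l) * ennreal (exp (l * d - l\<^sup>2 * vr / 2)) \<partial>lborel) * ennreal (exp (- k))"
      using gauss_mix[OF y vr0, of d] by simp
    also have "\<dots> = (\<integral>\<^sup>+ l. ennreal (normal_density 0 (1/y) l) * ennreal (exp (l * d - l\<^sup>2 * vr / 2 - k)) \<partial>lborel)"
    proof -
      have "(\<integral>\<^sup>+ l. ennreal (normal_density 0 (1/y) l) * ennreal (exp (l * d - l\<^sup>2 * vr / 2)) \<partial>lborel) * ennreal (exp (- k))
         = (\<integral>\<^sup>+ l. ennreal (normal_density 0 (1/y) l) * ennreal (exp (l * d - l\<^sup>2 * vr / 2)) * ennreal (exp (- k)) \<partial>lborel)"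
        by (rule nn_integral_multc[symmetric]) measurable
      also have "\<dots> = (\<integral>\<^sup>+ l. ennreal (normal_density 0 (1/y) l) * ennreal (exp (l * d - l\<^sup>2 * vr / 2 - k)) \<partial>lborel)"
      proof (intro nn_integral_cong)
        fix l
        have "exp (l * d - l\<^sup>2 * vr / 2 - k) = exp (l * d - l\<^sup>2 * vr / 2) * exp (- k)"
          by (simp add: exp_add[symmetric])
        thus "ennreal (normal_density 0 (1/y) l) * ennreal (exp (l * d - l\<^sup>2 * vr / 2)) * ennreal (exp (- k))
            = ennreal (normal_density 0 (1/y) l) * ennreal (exp (l * d - l\<^sup>2 * vr / 2 - k))"
          by (simp add: ennreal_mult mult.assoc)
      qed
      finally show ?thesis .
    qed
    also have "\<dots> \<le> (\<integral>\<^sup>+ l. ennreal (normal_density 0 (1/y) l) *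
           (\<integral>\<^sup>+ t. ennreal (exp (l * D t - l\<^sup>2 * (sqrt (W t))\<^sup>2 / 2)) \<partial>p0) \<partial>lborel)"
    proof (intro nn_integral_mono mult_left_mono)
      fix l
      define g where "g = (\<lambda>t. l * D t - l\<^sup>2 * (sqrt (W t))\<^sup>2 / 2)"
      have gi: "integrable p g" unfolding g_def
        using int intW by (intro Bochner_Integration.integrable_diff integrable_mult_right integrable_divide)
           (auto intro: Bochner_Integration.integrable_cong[THEN iffD1, OF refl _ intW] simp: sq)
      have gm: "g \<in> borel_measurable p0" unfolding g_def using Dmp0 Wmp0 by measurable
      have "(\<integral>t. g t \<partial>p) = l * d - l\<^sup>2 * vr / 2"
      proof -
        have "(\<integral>t. g t \<partial>p) = (\<integral>t. l * D t - l\<^sup>2 * W t / 2 \<partial>p)"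
          unfolding g_def by (intro Bochner_Integration.integral_cong refl) (simp add: sq)
        also have "\<dots> = l * d - l\<^sup>2 * vr / 2"
          using int intW by (simp add: d_def intWv)
        finally show ?thesis .
      qed
      with DV[OF p(1) p0(1) _ k gi gm] p(2) p0(2)
      show "ennreal (exp (l * d - l\<^sup>2 * vr / 2 - k)) \<le> (\<integral>\<^sup>+ t. ennreal (exp (l * D t - l\<^sup>2 * (sqrt (W t))\<^sup>2 / 2)) \<partial>p0)"
        unfolding g_def by simp
    qed auto
    finally show ?thesis unfolding LHS .
  qed
qed

lemma real_bound:
  fixes x a w :: real
  assumes w: "0 < w" "w \<le> 1"
  shows "exp (x * sqrt (max 0 a)) \<le> exp (x\<^sup>2) * ((1 + w * exp (a / 2) + 1 / w) / 2)"
proof -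
  define Z where "Z = max 0 a"
  have Z: "Z \<ge> 0" by (simp add: Z_def)
  have sZ: "(sqrt Z)\<^sup>2 = Z" using Z by simp
  have "0 \<le> (x - sqrt Z / 2)\<^sup>2" by simp
  hence "x * sqrt Z \<le> x\<^sup>2 + Z / 4" using sZ by (simp add: power2_eq_square algebra_simps)
  hence "exp (x * sqrt Z) \<le> exp (x\<^sup>2 + Z / 4)" by simp
  also have "\<dots> = exp (x\<^sup>2) * exp (Z / 4)" by (simp add: exp_add)
  finally have 1: "exp (x * sqrt Z) \<le> exp (x\<^sup>2) * exp (Z / 4)" .
  define u where "u = exp (Z / 4)"
  have u: "u > 0" "u\<^sup>2 = exp (Z / 2)" unfolding u_def by (auto simp: power2_eq_square exp_add[symmetric])
  have "0 \<le> (u * w - 1)\<^sup>2" by simp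
  hence "2 * u * w \<le> u\<^sup>2 * w * w + 1" by (simp add: power2_eq_square algebra_simps)
  hence "2 * u \<le> u\<^sup>2 * w + 1 / w" using w by (simp add: field_simps power2_eq_square)
  moreover have "exp (Z / 2) \<le> 1 + exp (a / 2)"
    by (cases "a \<le> 0") (auto simp: Z_def max_def)
  hence "u\<^sup>2 * w \<le> (1 + exp (a / 2)) * w" using u w by (intro mult_right_mono) auto
  moreover have "(1 + exp (a / 2)) * w \<le> 1 + w * exp (a / 2)" using w by (simp add: algebra_simps)
  ultimately have "2 * u \<le> 1 + w * exp (a / 2) + 1 / w" by linarith
  hence "u \<le> (1 + w * exp (a / 2) + 1 / w) / 2" by simp
  hence "exp (x\<^sup>2) * exp (Z / 4) \<le> exp (x\<^sup>2) * ((1 + w * exp (a / 2) + 1 / w) / 2)"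
    unfolding u_def by (intro mult_left_mono) auto
  with 1 show ?thesis unfolding Z_def by linarith
qed

lemma inv_w_bound:
  fixes c r :: real assumes c: "c > 0" and r: "r \<ge> 0"
  shows "1 / (sqrt c / sqrt (c + r)) \<le> 1 + r / (2 * c)"
proof -
  have "1 / (sqrt c / sqrt (c + r)) = sqrt (c + r) / sqrt c" by simp
  also have "\<dots> = sqrt ((c + r) / c)" by (simp add: real_sqrt_divide)
  also have "sqrt ((c + r) / c) = sqrt (1 + r / c)" using c by (simp add: field_simps)
  also have "\<dots> \<le> sqrt ((1 + r / (2 * c))\<^sup>2)"
    using c r by (intro real_sqrt_le_mono) (simp add: power2_eq_square field_simps)
  also have "\<dots> = 1 + r / (2 * c)" using c r by simp
  finally show ?thesis .
qed

theorem theorem4: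
  fixes M :: "'w measure" and T :: "'t measure" and Zs :: "'z measure"
    and S :: "'w \<Rightarrow> 'z" and \<theta> :: "'w \<Rightarrow> 't"
    and \<Delta> V :: "'t \<Rightarrow> 'z \<Rightarrow> real"
    and phat :: "'z \<Rightarrow> 't measure" and p0 :: "'t measure"
  assumes M: "prob_space M"
    and S_meas: "S \<in> M \<rightarrow>\<^sub>M Zs"
    and \<Delta>_meas: "(\<lambda>(t, z). \<Delta> t z) \<in> borel_measurable (T \<Otimes>\<^sub>M Zs)"
    and V_meas: "(\<lambda>(t, z). V t z) \<in> borel_measurable (T \<Otimes>\<^sub>M Zs)"
    and V_nonneg: "\<And>t z. t \<in> space T \<Longrightarrow> z \<in> space Zs \<Longrightarrow> V t z \<ge> 0"
    and canonical: "\<And>t l. t \<in> space T \<Longrightarrow>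
       (\<integral>\<^sup>+ \<omega>. ennreal (exp (l * \<Delta> t (S \<omega>) - l\<^sup>2 * (sqrt (V t (S \<omega>)))\<^sup>2 / 2)) \<partial>M) \<le> 1"
    and phat_kernel: "phat \<in> Zs \<rightarrow>\<^sub>M prob_algebra T"
    and p0: "prob_space p0" "sets p0 = sets T"
    and \<theta>_meas: "\<theta> \<in> M \<rightarrow>\<^sub>M T"
    and \<theta>_cond: "\<And>A B. A \<in> sets Zs \<Longrightarrow> B \<in> sets T \<Longrightarrow>
       measure M {\<omega> \<in> space M. S \<omega> \<in> A \<and> \<theta> \<omega> \<in> B}
         = (\<integral>\<omega>. indicator A (S \<omega>) * measure (phat (S \<omega>)) B \<partial>M)"
    and \<Delta>_int: "AE \<omega> in M. integrable (phat (S \<omega>)) (\<lambda>t. \<Delta> t (S \<omega>))"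
  shows
    "(\<forall>y>0. (\<integral>\<^sup>+ \<omega>.
        (let d = (\<integral>t. \<Delta> t (S \<omega>) \<partial>phat (S \<omega>));
             v = (\<integral>\<^sup>+ t. ennreal (V t (S \<omega>)) \<partial>phat (S \<omega>))
         in if v = \<infinity> then 0
            else ennreal (y / sqrt (y\<^sup>2 + enn2real v))
               * eexp (ereal (d\<^sup>2 / (2 * (y\<^sup>2 + enn2real v))) - KL (phat (S \<omega>)) p0)) \<partial>M) \<le> 1)
   \<and> (let vt = (\<integral>\<^sup>+ \<omega>. (\<integral>\<^sup>+ t. ennreal (V t (S \<omega>)) \<partial>phat (S \<omega>)) \<partial>M)
      in 0 < vt \<and> vt < \<infinity> \<longrightarrow>
        (\<forall>x\<ge>0. (\<integral>\<^sup>+ \<omega>.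
          (let d = (\<integral>t. \<Delta> t (S \<omega>) \<partial>phat (S \<omega>));
               v = (\<integral>\<^sup>+ t. ennreal (V t (S \<omega>)) \<partial>phat (S \<omega>))
           in ennreal (exp (x * sqrt (real_of_ereal
                (max 0 (ereal (d\<^sup>2) / enn2ereal (vt + v) - 2 * KL (phat (S \<omega>)) p0)))))) \<partial>M)
          \<le> ennreal (2 * exp (x\<^sup>2))))"
proof -
  interpret M: prob_space M by (rule M)
  interpret p0: prob_space p0 by (rule p0(1))
  note [measurable] = S_meas \<Delta>_meas V_meas
  have sp0[measurable_cong]: "sets p0 = sets T" by (rule p0(2))
  have spp0: "space p0 = space T" by (rule sets_eq_imp_space_eq[OF p0(2)])
  have kern: "prob_space (phat z) \<and> sets (phat z) = sets T" if "z \<in> space Zs" for z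
    using measurable_space[OF phat_kernel that] by (auto simp: space_prob_algebra)
  have Ssp: "S \<omega> \<in> space Zs" if "\<omega> \<in> space M" for \<omega> using measurable_space[OF S_meas that] .
  have LM: "pair_sigma_finite lborel M"
    by (simp add: pair_sigma_finite_def lborel.sigma_finite_measure_axioms M.sigma_finite_measure_axioms)
  have PM: "pair_sigma_finite p0 M"
    by (simp add: pair_sigma_finite_def p0.sigma_finite_measure_axioms M.sigma_finite_measure_axioms)
  define G where "G l \<omega> = (\<integral>\<^sup>+ t. ennreal (exp (l * \<Delta> t (S \<omega>) - l\<^sup>2 * (sqrt (V t (S \<omega>)))\<^sup>2 / 2)) \<partial>p0)" for l \<omega>
  define H where "H y \<omega> = (\<integral>\<^sup>+ l. ennreal (normal_density 0 (1/y) l) * G l \<omega> \<partial>lborel)" for y \<omega>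
  have Gm: "(\<lambda>(l, \<omega>). G l \<omega>) \<in> borel_measurable (lborel \<Otimes>\<^sub>M M)"
    unfolding G_def by measurable
  have Gm1: "G l \<in> borel_measurable M" for l
    unfolding G_def by measurable
  have Hm: "H y \<in> borel_measurable M" for y
    unfolding H_def G_def by measurable
  have Gint: "(\<integral>\<^sup>+ \<omega>. G l \<omega> \<partial>M) \<le> 1" for l
  proof -
    have "(\<integral>\<^sup>+ \<omega>. G l \<omega> \<partial>M) = (\<integral>\<^sup>+ t. \<integral>\<^sup>+ \<omega>. ennreal (exp (l * \<Delta> t (S \<omega>) - l\<^sup>2 * (sqrt (V t (S \<omega>)))\<^sup>2 / 2)) \<partial>M \<partial>p0)"
      unfolding G_def by (rule pair_sigma_finite.Fubini'[OF PM]) measurable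
    also have "\<dots> \<le> (\<integral>\<^sup>+ t. 1 \<partial>p0)"
      by (intro nn_integral_mono canonical) (simp add: spp0)
    also have "\<dots> = 1" by (simp add: p0.emeasure_space_1)
    finally show ?thesis .
  qed
  have Hint: "(\<integral>\<^sup>+ \<omega>. H y \<omega> \<partial>M) \<le> 1" if y: "y > 0" for y
  proof -
    have "(\<integral>\<^sup>+ \<omega>. H y \<omega> \<partial>M) = (\<integral>\<^sup>+ l. \<integral>\<^sup>+ \<omega>. ennreal (normal_density 0 (1/y) l) * G l \<omega> \<partial>M \<partial>lborel)"
      unfolding H_def by (rule pair_sigma_finite.Fubini'[OF LM]) (use Gm in measurable)
    also have "\<dots> = (\<integral>\<^sup>+ l. ennreal (normal_density 0 (1/y) l) * \<integral>\<^sup>+ \<omega>. G l \<omega> \<partial>M \<partial>lborel)"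
      by (intro nn_integral_cong nn_integral_cmult Gm1)
    also have "\<dots> \<le> (\<integral>\<^sup>+ l. ennreal (normal_density 0 (1/y) l) * 1 \<partial>lborel)"
      by (intro nn_integral_mono mult_left_mono Gint) auto
    also have "\<dots> = 1" using y by (simp add: nn_integral_normal_density)
    finally show ?thesis .
  qed
  have Hpt: "(let d = (\<integral>t. \<Delta> t (S \<omega>) \<partial>phat (S \<omega>));
             v = (\<integral>\<^sup>+ t. ennreal (V t (S \<omega>)) \<partial>phat (S \<omega>))
         in if v = \<infinity> then 0
            else ennreal (y / sqrt (y\<^sup>2 + enn2real v))
               * eexp (ereal (d\<^sup>2 / (2 * (y\<^sup>2 + enn2real v))) - KL (phat (S \<omega>)) p0)) \<le> H y \<omega>"
    if \<omega>: "\<omega> \<in> space M" and y: "y > 0" and int: "integrable (phat (S \<omega>)) (\<lambda>t. \<Delta> t (S \<omega>))" for \<omega> y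
  proof (cases "(\<integral>\<^sup>+ t. ennreal (V t (S \<omega>)) \<partial>phat (S \<omega>)) = \<infinity>")
    case True thus ?thesis by (simp add: Let_def)
  next
    case False
    have z: "S \<omega> \<in> space Zs" by (rule Ssp[OF \<omega>])
    have Dm: "(\<lambda>t. \<Delta> t (S \<omega>)) \<in> borel_measurable T"
      using measurable_compose[OF measurable_Pair2'[OF z] \<Delta>_meas] by simp
    have Wm: "(\<lambda>t. V t (S \<omega>)) \<in> borel_measurable T"
      using measurable_compose[OF measurable_Pair2'[OF z] V_meas] by simp
    show ?thesis
      using pointwise[of "phat (S \<omega>)" T p0 "\<lambda>t. \<Delta> t (S \<omega>)" "\<lambda>t. V t (S \<omega>)" y] kern[OF z] p0 Dm Wm
        V_nonneg[OF _ z] int False y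
      unfolding H_def G_def by simp
  qed
  show ?thesis
  proof
    show "\<forall>y>0. (\<integral>\<^sup>+ \<omega>.
        (let d = (\<integral>t. \<Delta> t (S \<omega>) \<partial>phat (S \<omega>));
             v = (\<integral>\<^sup>+ t. ennreal (V t (S \<omega>)) \<partial>phat (S \<omega>))
         in if v = \<infinity> then 0
            else ennreal (y / sqrt (y\<^sup>2 + enn2real v))
               * eexp (ereal (d\<^sup>2 / (2 * (y\<^sup>2 + enn2real v))) - KL (phat (S \<omega>)) p0)) \<partial>M) \<le> 1"
    proof (intro allI impI)
      fix y :: real assume y: "y > 0"
      show "(\<integral>\<^sup>+ \<omega>.
        (let d = (\<integral>t. \<Delta> t (S \<omega>) \<partial>phat (S \<omega>));
             v = (\<integral>\<^sup>+ t. ennreal (V t (S \<omega>)) \<partial>phat (S \<omega>))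
         in if v = \<infinity> then 0
            else ennreal (y / sqrt (y\<^sup>2 + enn2real v))
               * eexp (ereal (d\<^sup>2 / (2 * (y\<^sup>2 + enn2real v))) - KL (phat (S \<omega>)) p0)) \<partial>M) \<le> 1"
      proof (rule order_trans[OF nn_integral_mono_AE Hint[OF y]])
        show "AE \<omega> in M. (let d = (\<integral>t. \<Delta> t (S \<omega>) \<partial>phat (S \<omega>));
             v = (\<integral>\<^sup>+ t. ennreal (V t (S \<omega>)) \<partial>phat (S \<omega>))
         in if v = \<infinity> then 0
            else ennreal (y / sqrt (y\<^sup>2 + enn2real v))
               * eexp (ereal (d\<^sup>2 / (2 * (y\<^sup>2 + enn2real v))) - KL (phat (S \<omega>)) p0)) \<le> H y \<omega>"
          using \<Delta>_int AE_space by eventually_elim (rule Hpt[OF _ y], auto)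
      qed
    qed
  next
    define v where "v \<omega> = (\<integral>\<^sup>+ t. ennreal (V t (S \<omega>)) \<partial>phat (S \<omega>))" for \<omega>
    define vt where "vt = (\<integral>\<^sup>+ \<omega>. (\<integral>\<^sup>+ t. ennreal (V t (S \<omega>)) \<partial>phat (S \<omega>)) \<partial>M)"
    have vt_v: "vt = (\<integral>\<^sup>+ \<omega>. v \<omega> \<partial>M)" unfolding vt_def v_def ..
    have vm: "v \<in> borel_measurable M"
    proof -
      have K: "(\<lambda>\<omega>. phat (S \<omega>)) \<in> M \<rightarrow>\<^sub>M subprob_algebra T"
        by (rule measurable_prob_algebraD[OF measurable_compose[OF S_meas phat_kernel]])
      have f: "(\<lambda>(\<omega>, t). ennreal (V t (S \<omega>))) \<in> borel_measurable (M \<Otimes>\<^sub>M T)" by measurable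
      show ?thesis unfolding v_def
        using nn_integral_measurable_subprob_algebra2[OF f K] by simp
    qed
    have main: "(\<integral>\<^sup>+ \<omega>.
          (let d = (\<integral>t. \<Delta> t (S \<omega>) \<partial>phat (S \<omega>));
               v = (\<integral>\<^sup>+ t. ennreal (V t (S \<omega>)) \<partial>phat (S \<omega>))
           in ennreal (exp (x * sqrt (real_of_ereal
                (max 0 (ereal (d\<^sup>2) / enn2ereal (vt + v) - 2 * KL (phat (S \<omega>)) p0)))))) \<partial>M)
          \<le> ennreal (2 * exp (x\<^sup>2))"
      if vt0: "0 < vt" and vtf: "vt < \<infinity>" and x: "x \<ge> 0" for x
    proof -
      define vtr where "vtr = enn2real vt"
      have vtr: "vt = ennreal vtr" "vtr > 0" using vt0 vtf unfolding vtr_def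
        by (auto simp: less_top enn2real_positive_iff)
      define Y where "Y = sqrt vtr"
      have Y: "Y > 0" "Y\<^sup>2 = vtr" using vtr by (auto simp: Y_def)
      define c where "c = exp (x\<^sup>2)"
      have c1: "c \<ge> 1" unfolding c_def by simp
      define R where "R \<omega> = ennreal (c / 2) * (2 + H Y \<omega> + ennreal (1 / (2 * vtr)) * v \<omega>)" for \<omega>
      have AEv: "AE \<omega> in M. v \<omega> \<noteq> \<infinity>"
        using nn_integral_PInf_AE[OF vm] vtf vt_v by simp
      have pt: "(let d = (\<integral>t. \<Delta> t (S \<omega>) \<partial>phat (S \<omega>));
               v = (\<integral>\<^sup>+ t. ennreal (V t (S \<omega>)) \<partial>phat (S \<omega>))
           in ennreal (exp (x * sqrt (real_of_ereal
                (max 0 (ereal (d\<^sup>2) / enn2ereal (vt + v) - 2 * KL (phat (S \<omega>)) p0)))))) \<le> R \<omega>"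
        if \<omega>: "\<omega> \<in> space M" and int: "integrable (phat (S \<omega>)) (\<lambda>t. \<Delta> t (S \<omega>))"
          and vf: "v \<omega> \<noteq> \<infinity>" for \<omega>
      proof -
        define d where "d = (\<integral>t. \<Delta> t (S \<omega>) \<partial>phat (S \<omega>))"
        define vr where "vr = enn2real (v \<omega>)"
        have vr: "v \<omega> = ennreal vr" "vr \<ge> 0" using vf unfolding vr_def by (auto simp: less_top)
        have hp: "(let d = (\<integral>t. \<Delta> t (S \<omega>) \<partial>phat (S \<omega>));
             v = (\<integral>\<^sup>+ t. ennreal (V t (S \<omega>)) \<partial>phat (S \<omega>))
         in if v = \<infinity> then 0
            else ennreal (Y / sqrt (Y\<^sup>2 + enn2real v))
               * eexp (ereal (d\<^sup>2 / (2 * (Y\<^sup>2 + enn2real v))) - KL (phat (S \<omega>)) p0)) \<le> H Y \<omega>"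
          by (rule Hpt[OF \<omega> Y(1) int])
        hence I: "ennreal (Y / sqrt (vtr + vr)) * eexp (ereal (d\<^sup>2 / (2 * (vtr + vr))) - KL (phat (S \<omega>)) p0) \<le> H Y \<omega>"
          using vr vf Y(2) unfolding d_def v_def[symmetric] by (simp add: Let_def)
        have ee: "enn2ereal (vt + v \<omega>) = ereal (vtr + vr)"
          using vtr vr by (simp add: ennreal_plus[symmetric] del: ennreal_plus)
        have pos: "vtr + vr > 0" using vtr vr by simp
        have LHS: "(let d = (\<integral>t. \<Delta> t (S \<omega>) \<partial>phat (S \<omega>));
               v = (\<integral>\<^sup>+ t. ennreal (V t (S \<omega>)) \<partial>phat (S \<omega>))
           in ennreal (exp (x * sqrt (real_of_ereal
                (max 0 (ereal (d\<^sup>2) / enn2ereal (vt + v) - 2 * KL (phat (S \<omega>)) p0))))))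
           = ennreal (exp (x * sqrt (real_of_ereal
                (max 0 (ereal (d\<^sup>2) / ereal (vtr + vr) - 2 * KL (phat (S \<omega>)) p0)))))"
          unfolding d_def v_def[symmetric] ee[symmetric] by (simp add: Let_def)
        have R2: "ennreal c \<le> R \<omega>"
        proof -
          have "ennreal (c / 2 * 2) = ennreal (c / 2) * ennreal 2" using c1 by (intro ennreal_mult) auto
          hence "ennreal c = ennreal (c / 2) * 2" by simp
          also have "\<dots> \<le> R \<omega>" unfolding R_def by (intro mult_left_mono) auto
          finally show ?thesis .
        qed
        have z: "S \<omega> \<in> space Zs" by (rule Ssp[OF \<omega>])
        from KL_cases[of "phat (S \<omega>)" p0] kern[OF z] p0
        have "KL (phat (S \<omega>)) p0 = \<infinity> \<or> (\<exists>k. KL (phat (S \<omega>)) p0 = ereal k)" by auto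
        thus ?thesis
        proof
          assume k: "KL (phat (S \<omega>)) p0 = \<infinity>"
          have "ennreal (exp (x * sqrt (real_of_ereal
                (max 0 (ereal (d\<^sup>2) / ereal (vtr + vr) - 2 * KL (phat (S \<omega>)) p0))))) = 1"
            unfolding k using pos by simp
          also have "1 \<le> ennreal c" using c1 by simp
          finally show ?thesis unfolding LHS using R2 by simp
        next
          assume "\<exists>k. KL (phat (S \<omega>)) p0 = ereal k"
          then obtain k where k: "KL (phat (S \<omega>)) p0 = ereal k" by blast
          define a where "a = d\<^sup>2 / (vtr + vr) - 2 * k"
          define w where "w = Y / sqrt (vtr + vr)"
          have w: "0 < w" "w \<le> 1" unfolding w_def Y_def using vtr vr pos
            by (auto simp: field_simps real_sqrt_le_iff)
          have w': "w = sqrt vtr / sqrt (vtr + vr)" unfolding w_def Y_def ..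
          have J: "ereal (d\<^sup>2) / ereal (vtr + vr) - 2 * KL (phat (S \<omega>)) p0 = ereal a"
            unfolding k a_def using pos by simp
          have Ieq: "ennreal (Y / sqrt (vtr + vr)) * eexp (ereal (d\<^sup>2 / (2 * (vtr + vr))) - KL (phat (S \<omega>)) p0)
              = ennreal (w * exp (a / 2))"
          proof -
            have "exp (a / 2) = exp (d\<^sup>2 / (2 * (vtr + vr))) * exp (- k)"
              unfolding a_def by (simp add: exp_add[symmetric] field_simps)
            thus ?thesis unfolding k eexp_diff_ereal w_def[symmetric] using w
              by (simp add: ennreal_mult mult.assoc)
          qed
          have "exp (x * sqrt (max 0 a)) \<le> c * ((1 + w * exp (a / 2) + 1 / w) / 2)"
            unfolding c_def by (rule real_bound[OF w])
          also have "\<dots> \<le> c * ((1 + w * exp (a / 2) + (1 + vr / (2 * vtr))) / 2)"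
          proof -
            have iw: "1 / w \<le> 1 + vr / (2 * vtr)" using inv_w_bound[OF vtr(2) vr(2)] unfolding w' .
            show ?thesis using iw c1 by (intro mult_left_mono divide_right_mono add_left_mono) auto
          qed
          also have "\<dots> = c / 2 * (2 + w * exp (a / 2) + 1 / (2 * vtr) * vr)" by (simp add: field_simps)
          finally have rb: "exp (x * sqrt (max 0 a)) \<le> c / 2 * (2 + w * exp (a / 2) + 1 / (2 * vtr) * vr)" .
          have "ennreal (exp (x * sqrt (max 0 a))) \<le> ennreal (c / 2 * (2 + w * exp (a / 2) + 1 / (2 * vtr) * vr))"
            by (rule ennreal_leI[OF rb])
          also have "\<dots> = ennreal (c / 2) * (2 + ennreal (w * exp (a / 2)) + ennreal (1 / (2 * vtr)) * ennreal vr)"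
          proof -
            have A: "w * exp (a / 2) \<ge> 0" using w by simp
            have B: "1 / (2 * vtr) * vr \<ge> 0" using vr vtr by simp
            have "ennreal (c / 2 * (2 + w * exp (a / 2) + 1 / (2 * vtr) * vr))
                = ennreal (c / 2) * ennreal (2 + w * exp (a / 2) + 1 / (2 * vtr) * vr)"
              using c1 A B by (intro ennreal_mult) auto
            also have "ennreal (2 + w * exp (a / 2) + 1 / (2 * vtr) * vr)
                = ennreal 2 + ennreal (w * exp (a / 2)) + ennreal (1 / (2 * vtr) * vr)"
              using A B by (simp add: ennreal_plus)
            also have "ennreal (1 / (2 * vtr) * vr) = ennreal (1 / (2 * vtr)) * ennreal vr"
              using vr vtr by (intro ennreal_mult) auto
            finally show ?thesis by simp
          qed
          also have "\<dots> \<le> R \<omega>"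
            unfolding R_def vr(1)[symmetric] using I Ieq by (intro mult_left_mono add_mono) auto
          finally have fin: "ennreal (exp (x * sqrt (max 0 a))) \<le> R \<omega>" .
          have "real_of_ereal (max 0 (ereal a)) = max 0 a" by (cases "a \<le> 0") (auto simp: max_def)
          thus ?thesis unfolding LHS J using fin by simp
        qed
      qed
      have "(\<integral>\<^sup>+ \<omega>.
          (let d = (\<integral>t. \<Delta> t (S \<omega>) \<partial>phat (S \<omega>));
               v = (\<integral>\<^sup>+ t. ennreal (V t (S \<omega>)) \<partial>phat (S \<omega>))
           in ennreal (exp (x * sqrt (real_of_ereal
                (max 0 (ereal (d\<^sup>2) / enn2ereal (vt + v) - 2 * KL (phat (S \<omega>)) p0)))))) \<partial>M)
          \<le> (\<integral>\<^sup>+ \<omega>. R \<omega> \<partial>M)"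
        apply (rule nn_integral_mono_AE)
        using \<Delta>_int AEv AE_space apply eventually_elim
        apply (rule pt)
        apply auto
        done
      also have "(\<integral>\<^sup>+ \<omega>. R \<omega> \<partial>M) = ennreal (c / 2) * (2 + (\<integral>\<^sup>+ \<omega>. H Y \<omega> \<partial>M) + ennreal (1 / (2 * vtr)) * vt)"
        unfolding R_def vt_v using Hm vm
        by (simp add: nn_integral_cmult nn_integral_add M.emeasure_space_1)
      also have "\<dots> \<le> ennreal (c / 2) * (2 + 1 + ennreal (1 / 2))"
      proof -
        have "ennreal (1 / (2 * vtr)) * vt = ennreal (1 / 2)"
          using vtr by (simp add: ennreal_mult[symmetric])
        thus ?thesis using Hint[OF Y(1)] by (intro mult_left_mono add_mono) auto
      qed
      also have "\<dots> \<le> ennreal (c / 2) * 4"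
      proof (intro mult_left_mono)
        have "ennreal (1 / 2) \<le> ennreal 1" by (rule ennreal_leI) simp
        hence "ennreal (1 / 2) \<le> 1" by (simp only: ennreal_1)
        hence "(2::ennreal) + 1 + ennreal (1 / 2) \<le> 2 + 1 + 1" by (intro add_left_mono)
        thus "(2::ennreal) + 1 + ennreal (1 / 2) \<le> 4" by simp
      qed simp
      also have "\<dots> = ennreal (2 * exp (x\<^sup>2))"
      proof -
        have "ennreal (c / 2 * 4) = ennreal (c / 2) * ennreal 4" using c1 by (intro ennreal_mult) auto
        thus ?thesis unfolding c_def by simp
      qed
      finally show ?thesis .
    qed
    show "let vt = (\<integral>\<^sup>+ \<omega>. (\<integral>\<^sup>+ t. ennreal (V t (S \<omega>)) \<partial>phat (S \<omega>)) \<partial>M)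
      in 0 < vt \<and> vt < \<infinity> \<longrightarrow>
        (\<forall>x\<ge>0. (\<integral>\<^sup>+ \<omega>.
          (let d = (\<integral>t. \<Delta> t (S \<omega>) \<partial>phat (S \<omega>));
               v = (\<integral>\<^sup>+ t. ennreal (V t (S \<omega>)) \<partial>phat (S \<omega>))
           in ennreal (exp (x * sqrt (real_of_ereal
                (max 0 (ereal (d\<^sup>2) / enn2ereal (vt + v) - 2 * KL (phat (S \<omega>)) p0)))))) \<partial>M)
          \<le> ennreal (2 * exp (x\<^sup>2)))"
      apply (subst Let_def)
      using main unfolding vt_def by blast
  qed
qed

end
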